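(* Let $\alpha>0$, $n\in\mathbb N$, $0<a<b$ and let $x:[a,b]\to\mathbb R$ be a function of class $C^{n+1}$. Then, for $t\in(a,b]$, \[ {_a\mathcal{I}_t^\alpha} x(t)=\sum_{i=0}^{n}A_i(\alpha)\left(\ln\frac{t}{a}\right)^{\alpha+i} x_{i,0}(t)+\sum_{p=n+1}^\infty B(\alpha,p)\left(\ln\frac{t}{a}\right)^{\alpha+n-p}V_p(t), \] with \[ A_i(\alpha)=\frac{1}{\Gamma(\alpha+i+1)}\left[1+\sum_{p=n-i+1}^\infty\frac{\Gamma(p-\alpha-n)}{\Gamma(-\alpha-i)(p-n+i)!}\right],\qquad B(\alpha,p)=\frac{\Gamma(p-\alpha-n)}{\Gamma(\alpha)\Gamma(1-\alpha)(p-n)!}, \] \[ V_p(t)=\int_a^t (p-n)\left(\ln\frac{\tau}{a}\right)^{p-n-1}\frac{x(\tau)}{\tau}\,d\tau. \]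
   Context: For $0<a<b$ and $\alpha>0$ the left Hadamard fractional integral is ${_a\mathcal{I}_t^\alpha} x(t)=\frac{1}{\Gamma(\alpha)}\int_a^t \left(\ln\frac{t}{\tau}\right)^{\alpha-1}\frac{x(\tau)}{\tau}\,d\tau$. The functions $x_{k,0}$ are defined recursively by $x_{0,0}(t)=x(t)$ and $x_{k+1,0}(t)=t\frac{d}{dt}x_{k,0}(t)$ for $k\ge 0$. $\Gamma$ is Euler's gamma function. *)

theory Defs
  imports "HOL-Analysis.Analysis"
begin

definition Ck_on :: "nat \<Rightarrow> real set \<Rightarrow> (real \<Rightarrow> real) \<Rightarrow> bool" where
  "Ck_on k S f \<longleftrightarrow> (\<exists>D. D 0 = f \<and>
      (\<forall>j<k. \<forall>t\<in>S. (D j has_vector_derivative D (Suc j) t) (at t within S)) \<and>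
      continuous_on S (D k))"

definition hadamard_int :: "real \<Rightarrow> real \<Rightarrow> (real \<Rightarrow> real) \<Rightarrow> real \<Rightarrow> real" where
  "hadamard_int a \<alpha> x t =
     (1 / Gamma \<alpha>) * (LBINT \<tau>=a..t. (ln (t / \<tau>)) powr (\<alpha> - 1) * x \<tau> / \<tau>)"

fun xk0 :: "real \<Rightarrow> real \<Rightarrow> (real \<Rightarrow> real) \<Rightarrow> nat \<Rightarrow> real \<Rightarrow> real" where
  "xk0 a b x 0 = x"
| "xk0 a b x (Suc k) = (\<lambda>t. t * vector_derivative (xk0 a b x k) (at t within {a..b}))"

text \<open>The Gamma quotient Gamma(p-\<alpha>-n)/Gamma(-\<alpha>-i) equals
  pochhammer (-\<alpha>-i) (p-n+i), and Gamma(p-\<alpha>-n)/Gamma(1-\<alpha>) equals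
  pochhammer (1-\<alpha>) (p-n-1); these are used so that the coefficients are
  meaningful also when the Gamma functions have poles (integer \<alpha>).\<close>
definition A_coef :: "nat \<Rightarrow> real \<Rightarrow> nat \<Rightarrow> real" where
  "A_coef n \<alpha> i = (1 / Gamma (\<alpha> + real i + 1)) *
     (1 + (\<Sum>q. (\<lambda>p. pochhammer (- \<alpha> - real i) (p + i - n) / fact (p + i - n)) (q + (n - i + 1))))"

definition B_coef :: "nat \<Rightarrow> real \<Rightarrow> nat \<Rightarrow> real" where
  "B_coef n \<alpha> p = pochhammer (1 - \<alpha>) (p - n - 1) / (Gamma \<alpha> * fact (p - n))"

definition V_fun :: "nat \<Rightarrow> real \<Rightarrow> (real \<Rightarrow> real) \<Rightarrow> nat \<Rightarrow> real \<Rightarrow> real" where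
  "V_fun n a x p t = (LBINT \<tau>=a..t. real (p - n) * (ln (\<tau> / a)) ^ (p - n - 1) * x \<tau> / \<tau>)"

end

theory Submission
  imports Defs
begin

lemma poch_bound:
  fixes z :: real
  shows "\<exists>C. \<forall>k\<ge>1. \<bar>pochhammer z (k+1) / fact (k+1)\<bar> \<le> C * real k powr (z - 1)"
proof -
  have "convergent (rGamma_series z)" using rGamma_series_LIMSEQ by (auto simp: convergent_def)
  then have "Bseq (rGamma_series z)" by (rule convergent_imp_Bseq)
  then obtain C where C: "C > 0" "\<And>n. norm (rGamma_series z n) \<le> C" by (auto simp: Bseq_def)
  have "\<bar>pochhammer z (k+1) / fact (k+1)\<bar> \<le> C * real k powr (z - 1)" if k: "k \<ge> 1" for k
  proof -
    have kp: "real k > 0" using k by simp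
    have e: "exp (z * ln (real k)) = real k powr z" using kp by (simp add: powr_def)
    have "\<bar>pochhammer z (k+1) / (fact k * real k powr z)\<bar> \<le> C"
      using C(2)[of k] by (simp add: rGamma_series_def e)
    then have 1: "\<bar>pochhammer z (k+1)\<bar> \<le> C * (fact k * real k powr z)"
      using kp by (simp add: abs_divide abs_mult divide_le_eq)
    have "\<bar>pochhammer z (k+1) / fact (k+1)\<bar> = \<bar>pochhammer z (k+1)\<bar> / (real (k+1) * fact k)"
      by (simp add: abs_divide fact_Suc)
    also have "\<dots> \<le> C * (fact k * real k powr z) / (real (k+1) * fact k)"
      using 1 by (intro divide_right_mono) auto
    also have "\<dots> = C * real k powr z / real (k+1)" by simp
    also have "\<dots> \<le> C * real k powr z / real k"
      using kp C by (intro divide_left_mono mult_nonneg_nonneg) auto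
    also have "\<dots> = C * real k powr (z - 1)" using kp by (simp add: powr_diff)
    finally show ?thesis .
  qed
  then show ?thesis by blast
qed

lemma poch_lim0:
  fixes \<beta> :: real assumes "\<beta> > 0"
  shows "(\<lambda>N. pochhammer (1 - \<beta>) N / fact N) \<longlonglongrightarrow> 0"
proof -
  obtain C where C: "\<And>k. k \<ge> 1 \<Longrightarrow> \<bar>pochhammer (1-\<beta>) (k+1) / fact (k+1)\<bar> \<le> C * real k powr (1 - \<beta> - 1)"
    using poch_bound[of "1-\<beta>"] by blast
  have g: "(\<lambda>k. C * real k powr (- \<beta>)) \<longlonglongrightarrow> 0"
    using assms by (intro tendsto_mult_right_zero tendsto_neg_powr filterlim_real_sequentially) auto
  have "(\<lambda>k. pochhammer (1 - \<beta>) (Suc k) / fact (Suc k)) \<longlonglongrightarrow> 0"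
    apply (rule Lim_null_comparison[OF _ g])
    using C by (auto intro!: eventually_sequentiallyI[of 1])
  then show ?thesis by (rule LIMSEQ_imp_Suc)
qed

lemma alg: fixes F m P \<beta> :: real assumes "F > 0" "m \<ge> 0"
  shows "P / F - 1 + (-\<beta>) * P / ((1+m) * F) = P * (1 - \<beta> + m) / ((1+m) * F) - 1"
proof -
  have m: "1 + m > 0" using assms by simp
  have "P / F = P * (1+m) / ((1+m) * F)" using m by simp
  then have "P / F + (-\<beta>) * P / ((1+m) * F) = (P * (1+m) + (-\<beta>) * P) / ((1+m) * F)"
    by (metis add_divide_distrib)
  also have "P * (1+m) + (-\<beta>) * P = P * (1 - \<beta> + m)" by (simp add: algebra_simps)
  finally show ?thesis by simp
qed

lemma poch_sums:
  fixes \<beta> :: real assumes "\<beta> > 0"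
  shows "(\<lambda>q. pochhammer (- \<beta>) (q+1) / fact (q+1)) sums (-1)"
proof -
  have ps: "(\<Sum>q<N. pochhammer (- \<beta>) (q+1) / fact (q+1)) = pochhammer (1 - \<beta>) N / fact N - 1" for N
  proof (induction N)
    case 0 then show ?case by simp
  next
    case (Suc N)
    define P where "P = pochhammer (1 - \<beta>) N"
    have 1: "pochhammer (- \<beta>) (Suc N) = (-\<beta>) * P"
      by (simp add: pochhammer_rec P_def)
    have 2: "pochhammer (1 - \<beta>) (Suc N) = P * (1 - \<beta> + real N)"
      by (simp add: pochhammer_Suc P_def)
    have 3: "fact (N+1) = real (N+1) * (fact N :: real)" by (simp add: fact_Suc)
    have fN: "(fact N :: real) > 0" by simp
    have "(\<Sum>q<Suc N. pochhammer (- \<beta>) (q+1) / fact (q+1)) = P / fact N - 1 + (-\<beta>) * P / (real (N+1) * fact N)"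
      using Suc by (simp add: 1 3 P_def)
    also have "\<dots> = P * (1 - \<beta> + real N) / (real (N+1) * fact N) - 1"
      using alg[OF fN, of "real N" P \<beta>] by simp
    also have "\<dots> = pochhammer (1 - \<beta>) (Suc N) / fact (Suc N) - 1"
      using 2 3 by simp
    finally show ?case .
  qed
  show ?thesis unfolding sums_def ps
    using tendsto_diff[OF poch_lim0[OF assms] tendsto_const[of 1]] by simp
qed

lemma poch_summable:
  fixes \<alpha> :: real assumes "\<alpha> > 0"
  shows "summable (\<lambda>k. \<bar>pochhammer (1 - \<alpha>) k / fact k\<bar> / real (k+1))"
proof -
  obtain C where C: "\<And>k. k \<ge> 1 \<Longrightarrow> \<bar>pochhammer (-\<alpha>) (k+1) / fact (k+1)\<bar> \<le> C * real k powr (- \<alpha> - 1)"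
    using poch_bound[of "-\<alpha>"] by blast
  have eq: "\<bar>pochhammer (1 - \<alpha>) k / fact k\<bar> / real (k+1) = \<bar>pochhammer (-\<alpha>) (k+1) / fact (k+1)\<bar> / \<alpha>" for k
  proof -
    have "pochhammer (-\<alpha>) (k+1) = (-\<alpha>) * pochhammer (1 - \<alpha>) k" by (simp add: pochhammer_rec)
    moreover have "(fact (k+1)::real) = real (k+1) * fact k" by (simp add: fact_Suc)
    ultimately show ?thesis using assms by (simp add: abs_divide abs_mult)
  qed
  have s: "summable (\<lambda>k. C * real k powr (- \<alpha> - 1) / \<alpha>)"
    using assms by (intro summable_divide summable_mult) (simp add: summable_real_powr_iff)
  show ?thesis unfolding eq
  proof (rule summable_comparison_test'[OF s, of 1])
    fix k :: nat assume "k \<ge> 1"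
    then have "\<bar>pochhammer (-\<alpha>) (k+1) / fact (k+1)\<bar> \<le> C * real k powr (- \<alpha> - 1)" by (rule C)
    then have "\<bar>pochhammer (-\<alpha>) (k+1) / fact (k+1)\<bar> / \<alpha> \<le> C * real k powr (- \<alpha> - 1) / \<alpha>"
      using assms by (intro divide_right_mono) auto
    then show "norm (\<bar>pochhammer (-\<alpha>) (k+1) / fact (k+1)\<bar> / \<alpha>) \<le> C * real k powr (- \<alpha> - 1) / \<alpha>"
      using assms by simp
  qed
qed


lemma A_zero:
  assumes "\<alpha> > 0" "i \<le> n"
  shows "A_coef n \<alpha> i = 0"
proof -
  have e: "(\<lambda>q. (\<lambda>p. pochhammer (- \<alpha> - real i) (p + i - n) / fact (p + i - n)) (q + (n - i + 1)))
     = (\<lambda>q. pochhammer (- (\<alpha> + real i)) (q+1) / fact (q+1))"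
  proof
    fix q
    have "q + (n - i + 1) + i - n = q + 1" using assms(2) by simp
    then show "(\<lambda>p. pochhammer (- \<alpha> - real i) (p + i - n) / fact (p + i - n)) (q + (n - i + 1))
       = pochhammer (- (\<alpha> + real i)) (q+1) / fact (q+1)" by simp
  qed
  have "(\<lambda>q. pochhammer (- (\<alpha> + real i)) (q+1) / fact (q+1)) sums (-1)"
    using assms by (intro poch_sums) simp
  then have "(\<Sum>q. pochhammer (- (\<alpha> + real i)) (q+1) / fact (q+1)) = -1" by (rule sums_unique[symmetric])
  then show ?thesis unfolding A_coef_def e by simp
qed

lemma coef_alg:
  fixes P G s F A Lk U X m :: real
  assumes "s > 0" "F > 0" "G > 0" "Lk > 0" "m * m = 1"
  shows "P / (G * (s * F)) * (A / Lk) * (s * U * X) = (1/G) * A * X * (m * P / F * (m * (U / Lk)))"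
proof -
  have "(1/G) * A * X * (m * P / F * (m * (U / Lk))) = (1/G) * A * X * ((m * m) * P / F * (U / Lk))"
    by simp
  also have "\<dots> = (1/G) * A * X * (P / F * (U / Lk))" using assms(5) by simp
  also have "\<dots> = P / (G * (s * F)) * (A / Lk) * (s * U * X)"
    using assms by (simp add: divide_simps)
  finally show ?thesis by simp
qed

lemma coef_eq:
  fixes \<alpha> L u X :: real and k :: nat
  assumes "L > 0" "\<alpha> > 0"
  shows "pochhammer (1-\<alpha>) k / (Gamma \<alpha> * fact (Suc k)) * L powr (\<alpha> - 1 - real k) * (real (Suc k) * u^k * X)
    = (1 / Gamma \<alpha>) * L powr (\<alpha> - 1) * X * (((\<alpha> - 1) gchoose k) * (-(u/L))^k)"
proof -
  have G: "Gamma \<alpha> > 0" using assms by (simp add: Gamma_real_pos)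
  have 1: "L powr (\<alpha> - 1 - real k) = L powr (\<alpha> - 1) / L^k"
    using assms by (simp add: powr_diff powr_realpow)
  have 2: "((\<alpha> - 1) gchoose k) = (-1)^k * pochhammer (1 - \<alpha>) k / fact k"
    by (simp add: gbinomial_pochhammer)
  have 3: "(-(u/L))^k = (-1)^k * (u^k / L^k)"
    by (subst power_minus) (simp add: power_divide)
  have 4: "(fact (Suc k) :: real) = real (Suc k) * fact k" by (simp add: fact_Suc)
  have m: "((-1::real)^k) * (-1)^k = 1"
  proof -
    have "((-1::real)^k) * (-1)^k = ((-1) * (-1))^k" by (rule power_mult_distrib[symmetric])
    then show ?thesis by simp
  qed
  have Lk: "L^k > 0" using assms by simp
  show ?thesis unfolding 1 2 3 4
    by (rule coef_alg) (use G Lk m in auto)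
qed

lemma deriv_pow_ln:
  fixes \<tau> a :: real assumes "\<tau> > 0" "a > 0"
  shows "((\<lambda>\<tau>. ln (\<tau>/a) ^ (k+1) / real (k+1)) has_real_derivative ln (\<tau>/a) ^ k / \<tau>) (at \<tau> within S)"
proof -
  have d1: "((\<lambda>\<tau>. ln (\<tau>/a)) has_real_derivative 1/\<tau>) (at \<tau> within S)"
  proof -
    have "((\<lambda>\<tau>. ln (\<tau>/a)) has_real_derivative inverse (\<tau>/a) * (1/a)) (at \<tau> within S)"
      by (rule DERIV_chain2[OF DERIV_ln DERIV_cdivide[OF DERIV_ident]]) (use assms in simp)
    then show ?thesis by (rule DERIV_cong) (use assms in simp)
  qed
  have "((\<lambda>\<tau>. ln (\<tau>/a) ^ (k+1) / real (k+1)) has_real_derivative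
      of_nat (k+1) * (1/\<tau> * ln (\<tau>/a) ^ (k + 1 - Suc 0)) / real (k+1)) (at \<tau> within S)"
    by (intro DERIV_cdivide DERIV_power d1)
  then show ?thesis by (rule DERIV_cong) simp
qed

lemma int_log_pow:
  fixes a t :: real and k :: nat
  assumes "0 < a" "a \<le> t"
  shows "(\<integral>\<tau>. indicator {a..t} \<tau> * (ln (\<tau>/a) ^ k / \<tau>) \<partial>lborel) = ln (t/a) ^ (k+1) / real (k+1)"
proof -
  have "(\<integral>\<tau>. indicator {a..t} \<tau> * (ln (\<tau>/a) ^ k / \<tau>) \<partial>lborel) = (LBINT \<tau>:{a..t}. ln (\<tau>/a) ^ k / \<tau>)"
    by (simp add: set_lebesgue_integral_def)
  also have "\<dots> = (LBINT \<tau>=a..t. ln (\<tau>/a) ^ k / \<tau>)"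
    using assms by (simp add: interval_integral_Icc)
  also have "\<dots> = ln (t/a) ^ (k+1) / real (k+1) - ln (a/a) ^ (k+1) / real (k+1)"
  proof (rule interval_integral_FTC_finite)
    show "continuous_on {min a t..max a t} (\<lambda>\<tau>. ln (\<tau> / a) ^ k / \<tau>)"
      using assms by (intro continuous_intros) auto
    fix \<tau> assume "min a t \<le> \<tau>" "\<tau> \<le> max a t"
    then have p: "\<tau> > 0" using assms by auto
    show "((\<lambda>\<tau>. ln (\<tau>/a) ^ (k+1) / real (k+1)) has_vector_derivative ln (\<tau>/a) ^ k / \<tau>)
        (at \<tau> within {min a t..max a t})"
      unfolding has_real_derivative_iff_has_vector_derivative[symmetric]
      using deriv_pow_ln[OF p assms(1)] by simp
  qed
  also have "\<dots> = ln (t/a) ^ (k+1) / real (k+1)" using assms by simp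
  finally show ?thesis .
qed



theorem theorem6p3:
  fixes \<alpha> a b t :: real and n :: nat and x :: "real \<Rightarrow> real"
  assumes "\<alpha> > 0" and "0 < a" and "a < b"
    and "Ck_on (Suc n) {a..b} x"
    and "t \<in> {a<..b}"
  shows "(\<lambda>q. B_coef n \<alpha> (q + (n + 1)) * (ln (t / a)) powr (\<alpha> + real n - real (q + (n + 1)))
              * V_fun n a x (q + (n + 1)) t)
         sums (hadamard_int a \<alpha> x t
               - (\<Sum>i\<le>n. A_coef n \<alpha> i * (ln (t / a)) powr (\<alpha> + real i) * xk0 a b x i t))"
proof -
  from assms(5) have at: "a < t" "t \<le> b" by auto
  define L where "L = ln (t/a)"
  have Lpos: "L > 0" unfolding L_def using at assms(2) by (intro ln_gt_zero) (simp add: field_simps)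
  obtain D where D: "D 0 = x" "\<forall>j<Suc n. \<forall>\<tau>\<in>{a..b}. (D j has_vector_derivative D (Suc j) \<tau>) (at \<tau> within {a..b})"
    using assms(4) unfolding Ck_on_def by blast
  have cx: "continuous_on {a..t} x"
  proof -
    have "continuous_on {a..b} x" using D by (intro continuous_on_vector_derivative[of "{a..b}" x "D (Suc 0)"]) auto
    then show ?thesis by (rule continuous_on_subset) (use at in auto)
  qed
  obtain M where M: "\<And>\<tau>. \<tau> \<in> {a..t} \<Longrightarrow> \<bar>x \<tau>\<bar> \<le> M"
    using compact_imp_bounded[OF compact_continuous_image[OF cx compact_Icc]] unfolding bounded_iff by (metis image_eqI real_norm_def)
  define K where "K = 1 / Gamma \<alpha>"
  define g where "g k \<tau> = K * L powr (\<alpha>-1) * x \<tau> / \<tau> * (((\<alpha>-1) gchoose k) * (-(ln (\<tau>/a)/L))^k)" for k \<tau>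
  define f where "f k \<tau> = indicator {a..t} \<tau> * g k \<tau>" for k \<tau>
  have cg: "continuous_on {a..t} (g k)" for k
    unfolding g_def using cx assms(2) Lpos by (intro continuous_intros) auto
  have int_f: "integrable lborel (f k)" for k
    using borel_integrable_atLeastAtMost'[OF cg[of k]] unfolding set_integrable_def f_def by simp
  have rfacts: "0 \<le> ln (\<tau>/a) / L \<and> ln (\<tau>/a) / L < 1" if "\<tau> \<in> {a..t}" "\<tau> \<noteq> t" for \<tau>
  proof -
    have "1 \<le> \<tau>/a" using that assms(2) by (simp add: field_simps)
    then have 1: "0 \<le> ln (\<tau>/a)" by simp
    have "\<tau> < t" using that by auto
    then have "\<tau>/a < t/a" using assms(2) by (simp add: divide_strict_right_mono)
    then have "ln (\<tau>/a) < L" unfolding L_def using that assms(2) by (subst ln_less_cancel_iff) auto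
    then show ?thesis using 1 Lpos by (simp add: divide_less_eq)
  qed
  have sumx: "summable (\<lambda>k. norm (((\<alpha>-1) gchoose k) * r^k))" if "0 \<le> r" "r < 1" for r :: real
  proof -
    have "summable (\<lambda>k. ((\<alpha>-1) gchoose k) * (-(1+r)/2)^k)"
      using gen_binomial_real[of "-(1+r)/2" "\<alpha>-1"] that by (intro sums_summable) auto
    then show ?thesis by (rule powser_insidea) (use that in auto)
  qed
  have AE1: "AE \<tau> in lborel. summable (\<lambda>k. norm (f k \<tau>))"
  proof (rule eventually_mono[OF AE_lborel_singleton[of t]])
    fix \<tau> :: real assume nt: "\<tau> \<noteq> t"
    show "summable (\<lambda>k. norm (f k \<tau>))"
    proof (cases "\<tau> \<in> {a..t}")
      case True
      define r where "r = ln (\<tau>/a) / L"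
      have r: "0 \<le> r" "r < 1" using rfacts[OF True nt] unfolding r_def by auto
      have "summable (\<lambda>k. \<bar>K * L powr (\<alpha>-1) * x \<tau> / \<tau>\<bar> * norm (((\<alpha>-1) gchoose k) * r^k))"
        by (intro summable_mult sumx r)
      moreover have "norm (f k \<tau>) = \<bar>K * L powr (\<alpha>-1) * x \<tau> / \<tau>\<bar> * norm (((\<alpha>-1) gchoose k) * r^k)" for k
        using True r by (simp add: f_def g_def r_def[symmetric] abs_mult power_abs)
      ultimately show ?thesis by simp
    next
      case False then show ?thesis by (simp add: f_def)
    qed
  qed
  have int_bound: "(\<integral>\<tau>. norm (f k \<tau>) \<partial>lborel) \<le> \<bar>K\<bar> * L powr (\<alpha>-1) * M * L * (\<bar>pochhammer (1-\<alpha>) k / fact k\<bar> / real (k+1))" for k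
  proof -
    define C where "C = \<bar>K\<bar> * L powr (\<alpha>-1) * M * \<bar>(\<alpha>-1) gchoose k\<bar> / L^k"
    have "(\<integral>\<tau>. norm (f k \<tau>) \<partial>lborel) \<le> (\<integral>\<tau>. indicator {a..t} \<tau> * (C * (ln (\<tau>/a) ^ k / \<tau>)) \<partial>lborel)"
    proof (rule integral_mono)
      show "integrable lborel (\<lambda>\<tau>. norm (f k \<tau>))" using int_f by (rule integrable_norm)
      have "continuous_on {a..t} (\<lambda>\<tau>. C * (ln (\<tau>/a) ^ k / \<tau>))"
        using assms(2) by (intro continuous_intros) auto
      then show "integrable lborel (\<lambda>\<tau>. indicator {a..t} \<tau> * (C * (ln (\<tau>/a) ^ k / \<tau>)))"
        using borel_integrable_atLeastAtMost' unfolding set_integrable_def by force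
      fix \<tau> :: real
      show "norm (f k \<tau>) \<le> indicator {a..t} \<tau> * (C * (ln (\<tau>/a) ^ k / \<tau>))"
      proof (cases "\<tau> \<in> {a..t}")
        case True
        then have tp: "\<tau> > 0" using assms(2) by auto
        have "1 \<le> \<tau>/a" using True assms(2) by (simp add: field_simps)
        then have lp: "0 \<le> ln (\<tau>/a)" by simp
        have "norm (f k \<tau>) = \<bar>K\<bar> * L powr (\<alpha>-1) * \<bar>x \<tau>\<bar> * \<bar>(\<alpha>-1) gchoose k\<bar> / L^k * (ln (\<tau>/a) ^ k / \<tau>)"
          using True tp Lpos lp by (simp add: f_def g_def abs_mult abs_divide power_abs power_divide)
        also have "\<dots> \<le> C * (ln (\<tau>/a) ^ k / \<tau>)" unfolding C_def
          using M[OF True] tp lp Lpos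
          by (intro mult_right_mono divide_right_mono mult_left_mono) auto
        finally show ?thesis using True by simp
      next
        case False then show ?thesis by (simp add: f_def)
      qed
    qed
    also have "\<dots> = (\<integral>\<tau>. C * (indicator {a..t} \<tau> * (ln (\<tau>/a) ^ k / \<tau>)) \<partial>lborel)"
      by (intro arg_cong[where f="lebesgue_integral lborel"] ext) (rule mult.left_commute)
    also have "\<dots> = C * (\<integral>\<tau>. indicator {a..t} \<tau> * (ln (\<tau>/a) ^ k / \<tau>) \<partial>lborel)"
      by (rule integral_mult_right_zero)
    also have "\<dots> = C * (L^(k+1) / real (k+1))"
      using int_log_pow[of a t k] assms(2) at unfolding L_def by simp
    also have "\<dots> = \<bar>K\<bar> * L powr (\<alpha>-1) * M * L * (\<bar>pochhammer (1-\<alpha>) k / fact k\<bar> / real (k+1))"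
    proof -
      have "\<bar>(\<alpha>-1) gchoose k\<bar> = \<bar>pochhammer (1-\<alpha>) k / fact k\<bar>"
        by (simp add: gbinomial_pochhammer abs_mult abs_divide)
      moreover have "L^(k+1) = L^k * L" by simp
      ultimately show ?thesis unfolding C_def using Lpos by simp
    qed
    finally show ?thesis .
  qed
  have sum_int: "summable (\<lambda>k. \<integral>\<tau>. norm (f k \<tau>) \<partial>lborel)"
  proof (rule summable_comparison_test[OF _ summable_mult[OF poch_summable[OF assms(1)]]])
    show "\<exists>N. \<forall>k\<ge>N. norm (\<integral>\<tau>. norm (f k \<tau>) \<partial>lborel) \<le> (\<bar>K\<bar> * L powr (\<alpha>-1) * M * L) * (\<bar>pochhammer (1-\<alpha>) k / fact k\<bar> / real (k+1))"
      using int_bound by (auto simp: abs_of_nonneg[OF integral_nonneg])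
  qed
  have S: "(\<lambda>k. lebesgue_integral lborel (f k)) sums (\<integral>\<tau>. (\<Sum>k. f k \<tau>) \<partial>lborel)"
    by (rule sums_integral[OF int_f AE1 sum_int])
  have T: "B_coef n \<alpha> (k + (n + 1)) * L powr (\<alpha> + real n - real (k + (n + 1))) * V_fun n a x (k + (n + 1)) t
      = lebesgue_integral lborel (f k)" for k
  proof -
    have V: "V_fun n a x (k + (n + 1)) t = (\<integral>\<tau>. indicator {a..t} \<tau> * (real (Suc k) * ln (\<tau>/a) ^ k * x \<tau> / \<tau>) \<partial>lborel)"
      unfolding V_fun_def using at by (simp add: interval_integral_Icc set_lebesgue_integral_def)
    have B: "B_coef n \<alpha> (k + (n + 1)) = pochhammer (1-\<alpha>) k / (Gamma \<alpha> * fact (Suc k))"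
      unfolding B_coef_def by simp
    have P: "\<alpha> + real n - real (k + (n + 1)) = \<alpha> - 1 - real k" by simp
    have "B_coef n \<alpha> (k + (n + 1)) * L powr (\<alpha> + real n - real (k + (n + 1))) * V_fun n a x (k + (n + 1)) t
       = (\<integral>\<tau>. (pochhammer (1-\<alpha>) k / (Gamma \<alpha> * fact (Suc k)) * L powr (\<alpha> - 1 - real k)) *
            (indicator {a..t} \<tau> * (real (Suc k) * ln (\<tau>/a) ^ k * x \<tau> / \<tau>)) \<partial>lborel)"
      unfolding V B P by (rule integral_mult_right_zero[symmetric])
    also have "\<dots> = lebesgue_integral lborel (f k)"
    proof (intro arg_cong[where f="lebesgue_integral lborel"] ext)
      fix \<tau>
      show "(pochhammer (1-\<alpha>) k / (Gamma \<alpha> * fact (Suc k)) * L powr (\<alpha> - 1 - real k)) *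
            (indicator {a..t} \<tau> * (real (Suc k) * ln (\<tau>/a) ^ k * x \<tau> / \<tau>)) = f k \<tau>"
      proof (cases "\<tau> \<in> {a..t}")
        case True
        have "pochhammer (1-\<alpha>) k / (Gamma \<alpha> * fact (Suc k)) * L powr (\<alpha> - 1 - real k) * (real (Suc k) * ln (\<tau>/a)^k * (x \<tau> / \<tau>))
          = (1 / Gamma \<alpha>) * L powr (\<alpha> - 1) * (x \<tau> / \<tau>) * (((\<alpha> - 1) gchoose k) * (-(ln (\<tau>/a)/L))^k)"
          by (rule coef_eq[OF Lpos assms(1)])
        then show ?thesis using True unfolding f_def g_def K_def by simp
      next
        case False then show ?thesis by (simp add: f_def)
      qed
    qed
    finally show ?thesis .
  qed
  have H: "(\<integral>\<tau>. (\<Sum>k. f k \<tau>) \<partial>lborel) = hadamard_int a \<alpha> x t"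
  proof -
    define h where "h \<tau> = indicator {a..<t} \<tau> * (K * (ln (t/\<tau>) powr (\<alpha>-1) * x \<tau> / \<tau>))" for \<tau>
    have ch: "continuous_on {a..<t} (\<lambda>\<tau>. K * (ln (t/\<tau>) powr (\<alpha>-1) * x \<tau> / \<tau>))"
    proof -
      have cx': "continuous_on {a..<t} x" by (rule continuous_on_subset[OF cx]) auto
      have "\<forall>\<tau>\<in>{a..<t}. ln (t/\<tau>) \<noteq> 0"
      proof
        fix \<tau> assume "\<tau> \<in> {a..<t}"
        then have "1 < t/\<tau>" "\<tau> > 0" using assms(2) by (auto simp: field_simps)
        then show "ln (t/\<tau>) \<noteq> 0" by simp
      qed
      then show ?thesis using cx' assms(2) at by (intro continuous_intros) auto
    qed
    have hm: "h \<in> borel_measurable lborel"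
      using borel_measurable_continuous_on_indicator[OF _ ch] unfolding h_def by simp
    have Sm: "(\<lambda>\<tau>. \<Sum>k. f k \<tau>) \<in> borel_measurable lborel"
      using integrable_suminf[OF int_f AE1 sum_int] by (rule borel_measurable_integrable)
    have "(\<integral>\<tau>. (\<Sum>k. f k \<tau>) \<partial>lborel) = lebesgue_integral lborel h"
    proof (rule integral_cong_AE[OF Sm hm])
      show "AE \<tau> in lborel. (\<Sum>k. f k \<tau>) = h \<tau>"
      proof (rule eventually_mono[OF AE_lborel_singleton[of t]])
        fix \<tau> :: real assume nt: "\<tau> \<noteq> t"
        show "(\<Sum>k. f k \<tau>) = h \<tau>"
        proof (cases "\<tau> \<in> {a..t}")
          case True
          define r where "r = ln (\<tau>/a) / L"
          have r: "0 \<le> r" "r < 1" using rfacts[OF True nt] unfolding r_def by auto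
          have "(\<lambda>k. ((\<alpha>-1) gchoose k) * (-r)^k) sums (1 + -r) powr (\<alpha>-1)"
            by (rule gen_binomial_real) (use r in auto)
          then have "(\<lambda>k. (K * L powr (\<alpha>-1) * x \<tau> / \<tau>) * (((\<alpha>-1) gchoose k) * (-r)^k)) sums
              ((K * L powr (\<alpha>-1) * x \<tau> / \<tau>) * (1 + -r) powr (\<alpha>-1))"
            by (rule sums_mult)
          moreover have "f k \<tau> = (K * L powr (\<alpha>-1) * x \<tau> / \<tau>) * (((\<alpha>-1) gchoose k) * (-r)^k)" for k
            using True unfolding f_def g_def r_def by simp
          ultimately have su: "(\<lambda>k. f k \<tau>) sums ((K * L powr (\<alpha>-1) * x \<tau> / \<tau>) * (1 + -r) powr (\<alpha>-1))"
            by simp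
          have tp: "\<tau> > 0" using True assms(2) by auto
          have "L powr (\<alpha>-1) * (1 + -r) powr (\<alpha>-1) = (L * (1 - r)) powr (\<alpha>-1)"
            using Lpos r by (simp add: powr_mult)
          also have "L * (1 - r) = ln (t/\<tau>)"
            unfolding r_def L_def using Lpos tp assms(2) at unfolding L_def
            by (simp add: field_simps ln_div)
          finally have pe: "L powr (\<alpha>-1) * (1 + -r) powr (\<alpha>-1) = ln (t/\<tau>) powr (\<alpha>-1)" .
          have "\<tau> \<in> {a..<t}" using True nt by auto
          then have "h \<tau> = (K * L powr (\<alpha>-1) * x \<tau> / \<tau>) * (1 + -r) powr (\<alpha>-1)"
            unfolding h_def using pe[symmetric] by simp
          then show ?thesis using su by (simp add: sums_iff)
        next
          case False then show ?thesis using False by (auto simp: f_def h_def indicator_def)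
        qed
      qed
    qed
    also have "\<dots> = hadamard_int a \<alpha> x t"
    proof -
      have "hadamard_int a \<alpha> x t = K * (\<integral>\<tau>. indicator {a..t} \<tau> * (ln (t/\<tau>) powr (\<alpha>-1) * x \<tau> / \<tau>) \<partial>lborel)"
        unfolding hadamard_int_def K_def using at by (simp add: interval_integral_Icc set_lebesgue_integral_def)
      also have "\<dots> = (\<integral>\<tau>. K * (indicator {a..t} \<tau> * (ln (t/\<tau>) powr (\<alpha>-1) * x \<tau> / \<tau>)) \<partial>lborel)"
        by (rule integral_mult_right_zero[symmetric])
      also have "\<dots> = lebesgue_integral lborel h"
      proof (intro arg_cong[where f="lebesgue_integral lborel"] ext)
        fix \<tau>
        show "K * (indicator {a..t} \<tau> * (ln (t/\<tau>) powr (\<alpha>-1) * x \<tau> / \<tau>)) = h \<tau>"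
          by (cases "\<tau> = t") (auto simp: h_def indicator_def)
      qed
      finally show ?thesis by simp
    qed
    finally show ?thesis .
  qed
  have Asum: "(\<Sum>i\<le>n. A_coef n \<alpha> i * L powr (\<alpha> + real i) * xk0 a b x i t) = 0"
    by (rule sum.neutral) (auto simp: A_zero[OF assms(1)])
  have "(\<lambda>q. B_coef n \<alpha> (q + (n + 1)) * L powr (\<alpha> + real n - real (q + (n + 1))) * V_fun n a x (q + (n + 1)) t)
      sums hadamard_int a \<alpha> x t"
    using S unfolding H T[symmetric] .
  then show ?thesis unfolding L_def[symmetric] Asum by simp
qed

end
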